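(* Let $K\ge 2$, let $(\mathbf{x},\mathbf{y})$ be a training sample with one-hot label $\mathbf{y}$ whose ground-truth index is $g$ ($y_g=1$, $y_k=0$ for $k\neq g$), and let $\mathbf{o}=\mathcal{F}_\Theta(\mathbf{x})\in\mathbb{R}^K$ be the network's logits. Let $\mathcal{L}$ be any one of the three evidential losses $\mathcal{L}^{\mathrm{MSE}},\mathcal{L}^{\mathrm{CE}},\mathcal{L}^{\mathrm{Log}}$ defined in the context. (i) If $\mathcal{A}=\mathrm{ReLU}$ and $o_k\le 0$ for all $k$ (so that $\mathbf{e}=\mathbf{0}$, a zero-evidence sample), then $\partial\mathcal{L}/\partial o_k=0$ for every $k\in\{1,\dots,K\}$; consequently the gradient of $\mathcal{L}(\mathbf{x},\mathbf{y})$ with respect to the network parameters, $\partial\mathcal{L}/\partial\Theta=\sum_k(\partial\mathcal{L}/\partial o_k)(\partial o_k/\partial\Theta)$, is zero. (ii) If $\mathcal{A}=\mathrm{SoftPlus}$ or $\mathcal{A}=\exp$, then as the evidence tends to zero, i.e. as $o_k\to-\infty$ for all $k$, one has $\partial\mathcal{L}/\partial o_k\to 0$ for every $k$; consequently, whenever $\partial o_k/\partial\Theta$ remains bounded, the gradient of $\mathcal{L}(\mathbf{x},\mathbf{y})$ with respect to $\Theta$ tends to zero.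
   Context: Evidential classification model for $K$ classes: a neural network $\mathcal{F}_\Theta$ outputs logits $\mathbf{o}=\mathcal{F}_\Theta(\mathbf{x})\in\mathbb{R}^K$; a non-negative activation $\mathcal{A}$ applied componentwise gives the evidence $\mathbf{e}=\mathcal{A}(\mathbf{o})$, with $\mathcal{A}\in\{\mathrm{ReLU},\mathrm{SoftPlus},\exp\}$, where $\mathrm{ReLU}(t)=\max(0,t)$ (with derivative taken to be $1$ if $t>0$ and $0$ if $t\le 0$), $\mathrm{SoftPlus}(t)=\log(1+e^t)$. Dirichlet parameters $\boldsymbol\alpha=\mathbf{e}+\mathbf{1}$, Dirichlet strength $S=\sum_{k=1}^K\alpha_k=K+\sum_k e_k$. The evidential losses are $\mathcal{L}^{\mathrm{MSE}}(\mathbf{x},\mathbf{y})=\sum_{j=1}^K\big(y_j-\alpha_j/S\big)^2+\frac{\alpha_j(S-\alpha_j)}{S^2(S+1)}$, $\mathcal{L}^{\mathrm{CE}}(\mathbf{x},\mathbf{y})=\sum_{k=1}^K y_k\big(\Psi(S)-\Psi(\alpha_k)\big)$ with $\Psi$ the digamma function, $\mathcal{L}^{\mathrm{Log}}(\mathbf{x},\mathbf{y})=\sum_{k=1}^K y_k\big(\log S-\log\alpha_k\big)$. A zero-evidence sample is one for which the model outputs $e_k=0$ for all classes $k$. *)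

theory Defs
  imports "HOL-Analysis.Analysis"
begin

text \<open>Classes are indexed by a finite type 'n (K = CARD('n)); vectors in R^K are real^'n.\<close>

datatype activation = ReLU | SoftPlus | ExpAct
datatype evid_loss = MSE_loss | CE_loss | Log_loss

definition relu :: "real \<Rightarrow> real" where "relu t = max 0 t"
definition softplus :: "real \<Rightarrow> real" where "softplus t = ln (1 + exp t)"

definition relu_deriv :: "real \<Rightarrow> real" where "relu_deriv t = (if t > 0 then 1 else 0)"

fun act :: "activation \<Rightarrow> real \<Rightarrow> real" where
  "act ReLU t = relu t"
| "act SoftPlus t = softplus t"
| "act ExpAct t = exp t"

definition evidence :: "activation \<Rightarrow> real^'n \<Rightarrow> real^'n" where
  "evidence A z = (\<chi> k. act A (z $ k))"

definition dir_alpha :: "real^'n \<Rightarrow> real^'n" where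
  "dir_alpha e = (\<chi> k. e $ k + 1)"

definition dir_strength :: "real^'n \<Rightarrow> real" where
  "dir_strength e = (\<Sum>k\<in>UNIV. dir_alpha e $ k)"

fun loss_ev :: "evid_loss \<Rightarrow> real^'n \<Rightarrow> real^'n \<Rightarrow> real" where
  "loss_ev MSE_loss y e =
     (let \<alpha> = dir_alpha e; S = dir_strength e in
      \<Sum>j\<in>UNIV. (y $ j - \<alpha> $ j / S)^2 + \<alpha> $ j * (S - \<alpha> $ j) / (S^2 * (S + 1)))"
| "loss_ev CE_loss y e =
     (let \<alpha> = dir_alpha e; S = dir_strength e in
      \<Sum>k\<in>UNIV. y $ k * (Digamma S - Digamma (\<alpha> $ k)))"
| "loss_ev Log_loss y e =
     (let \<alpha> = dir_alpha e; S = dir_strength e in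
      \<Sum>k\<in>UNIV. y $ k * (ln S - ln (\<alpha> $ k)))"

definition loss_logits :: "evid_loss \<Rightarrow> activation \<Rightarrow> real^'n \<Rightarrow> real^'n \<Rightarrow> real" where
  "loss_logits L A y z = loss_ev L y (evidence A z)"

definition one_hot :: "'n \<Rightarrow> real^'n" where
  "one_hot g = (\<chi> k. if k = g then 1 else 0)"

definition partial_at :: "(real^'n \<Rightarrow> real) \<Rightarrow> 'n \<Rightarrow> real^'n \<Rightarrow> real" where
  "partial_at f k v = deriv (\<lambda>t. f (v + (t - v $ k) *\<^sub>R axis k 1)) (v $ k)"

definition partial_differentiable :: "(real^'n \<Rightarrow> real) \<Rightarrow> 'n \<Rightarrow> real^'n \<Rightarrow> bool" where
  "partial_differentiable f k v \<longleftrightarrow> (\<lambda>t. f (v + (t - v $ k) *\<^sub>R axis k 1)) differentiable (at (v $ k))"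

text \<open>Chain-rule gradient dL/do_k for the ReLU activation, with the paper's ReLU-derivative
  convention: (dL/de_k)(e) * ReLU'(o_k).\<close>
definition relu_grad_logit :: "evid_loss \<Rightarrow> real^'n \<Rightarrow> real^'n \<Rightarrow> 'n \<Rightarrow> real" where
  "relu_grad_logit L y z k =
     partial_at (loss_ev L y) k (evidence ReLU z) * relu_deriv (z $ k)"

definition all_to_bot :: "(real^'n) filter" where
  "all_to_bot = (INF b. principal {z. \<forall>k. z $ k \<le> b})"

end

theory Submission
  imports Defs
begin

fun lterm :: "evid_loss \<Rightarrow> real \<Rightarrow> real \<Rightarrow> real \<Rightarrow> real" where
  "lterm MSE_loss yj a s = (yj - a/s)^2 + a*(s-a)/(s^2*(s+1))"
| "lterm CE_loss yj a s = yj*(Digamma s - Digamma a)"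
| "lterm Log_loss yj a s = yj*(ln s - ln a)"

fun dA :: "evid_loss \<Rightarrow> real \<Rightarrow> real \<Rightarrow> real \<Rightarrow> real" where
  "dA MSE_loss yj a s = 2*(yj - a/s)*(-(1/s)) + (s - 2*a)/(s^2*(s+1))"
| "dA CE_loss yj a s = -(yj * Polygamma 1 a)"
| "dA Log_loss yj a s = -(yj/a)"

fun dS :: "evid_loss \<Rightarrow> real \<Rightarrow> real \<Rightarrow> real \<Rightarrow> real" where
  "dS MSE_loss yj a s = 2*(yj - a/s)*(a/s^2) + (a*(s^2*(s+1)) - a*(s-a)*(3 * s^2 + 2 * s))/(s^2*(s+1))^2"
| "dS CE_loss yj a s = yj * Polygamma 1 s"
| "dS Log_loss yj a s = yj/s"

lemma pos_not_nonpos_Int: "(x::real) > 0 \<Longrightarrow> x \<notin> \<int>\<^sub>\<le>\<^sub>0"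
  by (auto elim!: nonpos_Ints_cases)

lemma mse_eq: fixes A S a' s' yj :: real assumes "S > 0" shows
 "((a' * (S - A) + (s' - a') * A) * ((S)\<^sup>2 * (S + 1)) -
        A * (S - A) * (2 * (s' * S) * (S + 1) + s' * (S)\<^sup>2)) /
       ((S)\<^sup>2 * (S + 1) * ((S)\<^sup>2 * (S + 1))) -
       2 * ((a' * S - A * s') * (yj - A / S)) / (S * S) =
       ((S - 2 * A) / ((S)\<^sup>2 * (S + 1)) -
        (2 * yj - 2 * A / S) / S) *
       a' +
       ((2 * yj - 2 * A / S) * A / (S)\<^sup>2 +
        (A * ((S)\<^sup>2 * (S + 1)) -
         A * (S - A) * (3 * (S)\<^sup>2 + 2 * S)) /
        ((S)\<^sup>2 * (S + 1))\<^sup>2) *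
       s'"
proof -
  have "S \<noteq> 0" "S + 1 \<noteq> 0" using assms by auto
  then show ?thesis
    apply (simp add: divide_simps)
    apply algebra
    done
qed

lemma lterm_deriv:
  assumes da: "(a has_real_derivative a') (at t)" and ds: "(s has_real_derivative s') (at t)"
    and ap: "a t > 0" and sp: "s t > 0"
  shows "((\<lambda>x. lterm L yj (a x) (s x)) has_real_derivative
           (dA L yj (a t) (s t) * a' + dS L yj (a t) (s t) * s')) (at t)"
proof (cases L)
  case MSE_loss
  show ?thesis unfolding MSE_loss lterm.simps dA.simps dS.simps
    using ap sp
    apply (auto intro!: derivative_eq_intros da ds)
    apply (rule mse_eq)
    apply simp
    done
next
  case CE_loss
  show ?thesis unfolding CE_loss lterm.simps dA.simps dS.simps
    using ap sp
    by (auto intro!: derivative_eq_intros da ds pos_not_nonpos_Int simp: algebra_simps)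
next
  case Log_loss
  show ?thesis unfolding Log_loss lterm.simps dA.simps dS.simps
    using ap sp
    by (auto intro!: derivative_eq_intros da ds simp: field_simps)
qed

lemma isCont_Pg: "(x::real) > 0 \<Longrightarrow> isCont (Polygamma n) x"
  by (rule DERIV_isCont[OF has_field_derivative_Polygamma[OF pos_not_nonpos_Int]])

lemma dA_tendsto:
  assumes "(a \<longlongrightarrow> a0) F" "(s \<longlongrightarrow> s0) F" "a0 > 0" "s0 > 0"
  shows "((\<lambda>x. dA L yj (a x) (s x)) \<longlongrightarrow> dA L yj a0 s0) F"
  using assms
  by (cases L) (auto intro!: tendsto_intros isCont_tendsto_compose[OF isCont_Pg, where f=a])

lemma dS_tendsto:
  assumes "(a \<longlongrightarrow> a0) F" "(s \<longlongrightarrow> s0) F" "a0 > 0" "s0 > 0"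
  shows "((\<lambda>x. dS L yj (a x) (s x)) \<longlongrightarrow> dS L yj a0 s0) F"
  using assms
  by (cases L) (auto intro!: tendsto_intros isCont_tendsto_compose[OF isCont_Pg, where f=s])

lemma loss_ev_alt:
  "loss_ev L y e = (\<Sum>j\<in>UNIV. lterm L (y$j) (e$j + 1) (\<Sum>i\<in>UNIV. e$i + 1))"
  by (cases L) (simp_all add: Let_def dir_alpha_def dir_strength_def)

lemma loss_deriv:
  fixes u :: "real \<Rightarrow> real^'n::finite"
  assumes d: "\<And>j. ((\<lambda>t. u t $ j) has_real_derivative u' j) (at t0)"
    and pos: "\<And>j. u t0 $ j > -1"
  shows "((\<lambda>t. loss_ev L y (u t)) has_real_derivative
    (\<Sum>j\<in>UNIV. dA L (y$j) (u t0 $ j + 1) (\<Sum>i\<in>UNIV. u t0 $ i + 1) * u' j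
              + dS L (y$j) (u t0 $ j + 1) (\<Sum>i\<in>UNIV. u t0 $ i + 1) * (\<Sum>i\<in>UNIV. u' i))) (at t0)"
proof -
  have S: "((\<lambda>t. \<Sum>i\<in>UNIV. u t $ i + 1) has_real_derivative (\<Sum>i\<in>UNIV. u' i)) (at t0)"
    by (rule DERIV_sum) (auto intro!: derivative_eq_intros d)
  have Sp: "(\<Sum>i\<in>UNIV. u t0 $ i + 1) > 0"
    by (rule sum_pos) (use pos in \<open>auto simp: add.commute\<close>, smt (verit) pos)
  show ?thesis unfolding loss_ev_alt
    apply (rule DERIV_sum)
    apply (rule lterm_deriv[OF _ S _ Sp])
     apply (auto intro!: derivative_eq_intros d)
    using pos by smt
qed

fun actd :: "activation \<Rightarrow> real \<Rightarrow> real" where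
  "actd ReLU t = relu_deriv t"
| "actd SoftPlus t = exp t / (1 + exp t)"
| "actd ExpAct t = exp t"

lemma act_SoftPlus: "act SoftPlus = (\<lambda>t. ln (1 + exp t))"
  by (rule ext) (simp add: softplus_def)

lemma act_Exp: "act ExpAct = exp"
  by (rule ext) simp

lemma actd_Exp: "actd ExpAct = exp"
  by (rule ext) simp

lemma act_deriv: "A \<noteq> ReLU \<Longrightarrow> (act A has_real_derivative actd A t) (at t)"
  by (cases A) (auto simp: act_SoftPlus act_Exp intro!: derivative_eq_intros add_pos_pos)

lemma act_pos: "A \<noteq> ReLU \<Longrightarrow> act A t > 0"
  by (cases A) (auto simp: softplus_def intro!: ln_gt_zero)

lemma act_bot: "A \<noteq> ReLU \<Longrightarrow> (act A \<longlongrightarrow> 0) at_bot"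
proof (cases A)
  case SoftPlus
  have "((\<lambda>t::real. ln (1 + exp t)) \<longlongrightarrow> ln (1 + 0)) at_bot"
    by (intro tendsto_intros exp_at_bot) auto
  then show ?thesis using SoftPlus by (simp add: act_SoftPlus)
qed (auto simp: act_Exp intro: exp_at_bot)

lemma actd_bot: "A \<noteq> ReLU \<Longrightarrow> (actd A \<longlongrightarrow> 0) at_bot"
proof (cases A)
  case SoftPlus
  have "((\<lambda>t::real. exp t / (1 + exp t)) \<longlongrightarrow> 0 / (1 + 0)) at_bot"
    by (intro tendsto_intros exp_at_bot) auto
  then show ?thesis using SoftPlus by (simp add: actd.simps[abs_def] cong: activation.case_cong)
qed (auto simp: actd_Exp intro: exp_at_bot)

lemma coord_bot: "filterlim (\<lambda>z::real^'n::finite. z $ k) at_bot all_to_bot"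
  unfolding filterlim_at_bot all_to_bot_def
proof
  fix Z :: real
  show "eventually (\<lambda>z. z $ k \<le> Z) (INF b. principal {z::real^'n. \<forall>k. z $ k \<le> b})"
    by (rule eventually_INF1[of Z]) (auto simp: eventually_principal)
qed

lemma vec_upd_nth: "(z + (t - z $ k) *\<^sub>R axis k 1) $ j = (if j = k then t else z $ j)"
  by (simp add: axis_def)


theorem theorem1:
  fixes g :: "'n::finite"
    and L :: evid_loss
  assumes K2: "CARD('n) \<ge> 2"
  shows
    \<comment> \<open>(i) ReLU, zero-evidence sample: dL/do_k = 0 for all k, hence the parameter gradient
        \<Sum>_k (dL/do_k) (do_k/d\<Theta>) vanishes, for any Jacobian entries J k.\<close>
    "(\<forall>(z::real^'n). (\<forall>k. z $ k \<le> 0) \<longrightarrow>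
        evidence ReLU z = 0 \<and>
        (\<forall>k. partial_differentiable (loss_ev L (one_hot g)) k (evidence ReLU z)
             \<and> relu_grad_logit L (one_hot g) z k = 0) \<and>
        (\<forall>(J::'n \<Rightarrow> 'v::real_normed_vector).
            (\<Sum>k\<in>UNIV. relu_grad_logit L (one_hot g) z k *\<^sub>R J k) = 0))
     \<and>
    \<comment> \<open>(ii) SoftPlus / exp: as all o_k \<rightarrow> -\<infinity>, dL/do_k \<rightarrow> 0, and the parameter gradient
        tends to 0 whenever the Jacobian entries do_k/d\<Theta> stay bounded.\<close>
     (\<forall>A\<in>{SoftPlus, ExpAct}.
        (\<forall>(z::real^'n) k. partial_differentiable (loss_logits L A (one_hot g)) k z)
      \<and> (\<forall>k. ((\<lambda>z. partial_at (loss_logits L A (one_hot g)) k z) \<longlongrightarrow> 0) all_to_bot)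
      \<and> (\<forall>(J::real^'n \<Rightarrow> 'n \<Rightarrow> 'w::real_normed_vector).
           (\<exists>B. eventually (\<lambda>z. \<forall>k. norm (J z k) \<le> B) all_to_bot) \<longrightarrow>
           ((\<lambda>z. \<Sum>k\<in>UNIV. partial_at (loss_logits L A (one_hot g)) k z *\<^sub>R J z k) \<longlongrightarrow> 0)
             all_to_bot))"
proof -
  let ?y = "one_hot g"
  have P1: "\<forall>(z::real^'n). (\<forall>k. z $ k \<le> 0) \<longrightarrow>
        evidence ReLU z = 0 \<and>
        (\<forall>k. partial_differentiable (loss_ev L ?y) k (evidence ReLU z)
             \<and> relu_grad_logit L ?y z k = 0) \<and>
        (\<forall>(J::'n \<Rightarrow> 'v::real_normed_vector).
            (\<Sum>k\<in>UNIV. relu_grad_logit L ?y z k *\<^sub>R J k) = 0)"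
  proof (intro allI impI)
    fix z :: "real^'n" assume z: "\<forall>k. z $ k \<le> 0"
    have ev0: "evidence ReLU z = 0"
      using z by (simp add: evidence_def relu_def vec_eq_iff max_def) (meson order_antisym)
    have rg0: "relu_grad_logit L ?y z k = 0" for k
      using z[rule_format, of k] by (simp add: relu_grad_logit_def relu_deriv_def)
    have pd: "partial_differentiable (loss_ev L ?y) k (evidence ReLU z)" for k
    proof -
      let ?u = "\<lambda>t. (0::real^'n) + (t - (0::real^'n) $ k) *\<^sub>R axis k 1"
      have uj: "?u t $ j = (if j = k then t else 0)" for t j
        using vec_upd_nth[of 0 t k j] by simp
      have "((\<lambda>t. loss_ev L ?y (?u t)) has_real_derivative
         (\<Sum>j\<in>UNIV. dA L (?y$j) (?u 0 $ j + 1) (\<Sum>i\<in>UNIV. ?u 0 $ i + 1) * (if j = k then 1 else 0)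
              + dS L (?y$j) (?u 0 $ j + 1) (\<Sum>i\<in>UNIV. ?u 0 $ i + 1) * (\<Sum>i\<in>UNIV. (if i = k then 1 else 0)))) (at 0)"
      proof (rule loss_deriv)
        fix j
        show "((\<lambda>t. ?u t $ j) has_real_derivative (if j = k then 1 else 0)) (at 0)"
          unfolding uj by (cases "j = k") (auto intro!: derivative_eq_intros)
        show "?u 0 $ j > -1" unfolding uj by simp
      qed
      then show ?thesis
        unfolding partial_differentiable_def ev0 real_differentiable_def by auto
    qed
    show "evidence ReLU z = 0 \<and>
        (\<forall>k. partial_differentiable (loss_ev L ?y) k (evidence ReLU z)
             \<and> relu_grad_logit L ?y z k = 0) \<and>
        (\<forall>(J::'n \<Rightarrow> 'v::real_normed_vector).
            (\<Sum>k\<in>UNIV. relu_grad_logit L ?y z k *\<^sub>R J k) = 0)"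
      using ev0 rg0 pd by simp
  qed
  have P2: "(\<forall>(z::real^'n) k. partial_differentiable (loss_logits L A ?y) k z)
      \<and> (\<forall>k. ((\<lambda>z. partial_at (loss_logits L A ?y) k z) \<longlongrightarrow> 0) all_to_bot)
      \<and> (\<forall>(J::real^'n \<Rightarrow> 'n \<Rightarrow> 'w::real_normed_vector).
           (\<exists>B. eventually (\<lambda>z. \<forall>k. norm (J z k) \<le> B) all_to_bot) \<longrightarrow>
           ((\<lambda>z. \<Sum>k\<in>UNIV. partial_at (loss_logits L A ?y) k z *\<^sub>R J z k) \<longlongrightarrow> 0)
             all_to_bot)" if AA: "A \<in> {SoftPlus, ExpAct}" for A
  proof -
    have A: "A \<noteq> ReLU" using AA by auto
    define c where "c z k j = (if j = k then actd A (z $ k) else 0)" for z :: "real^'n" and k j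
    define P where "P z k = (\<Sum>j\<in>UNIV. dA L (?y$j) (evidence A z $ j + 1) (\<Sum>i\<in>UNIV. evidence A z $ i + 1) * c z k j
              + dS L (?y$j) (evidence A z $ j + 1) (\<Sum>i\<in>UNIV. evidence A z $ i + 1) * (\<Sum>i\<in>UNIV. c z k i))" for z k
    have key: "((\<lambda>t. loss_logits L A ?y (z + (t - z $ k) *\<^sub>R axis k 1)) has_real_derivative P z k) (at (z $ k))"
      for z k
    proof -
      let ?u = "\<lambda>t. evidence A (z + (t - z $ k) *\<^sub>R axis k 1)"
      have uj: "?u t $ j = act A (if j = k then t else z $ j)" for t j
        using vec_upd_nth[of z t k j] by (simp add: evidence_def)
      show ?thesis unfolding loss_logits_def
      proof (rule DERIV_cong[OF loss_deriv])
        fix j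
        show "((\<lambda>t. ?u t $ j) has_real_derivative c z k j) (at (z $ k))"
          unfolding uj c_def by (cases "j = k") (auto intro!: derivative_eq_intros act_deriv[OF A])
        show "?u (z $ k) $ j > -1" unfolding uj using act_pos[OF A] by (smt (verit))
      next
        have "?u (z $ k) = evidence A z" by simp
        then show "(\<Sum>j\<in>UNIV. dA L (?y$j) (?u (z $ k) $ j + 1) (\<Sum>i\<in>UNIV. ?u (z $ k) $ i + 1) * c z k j
              + dS L (?y$j) (?u (z $ k) $ j + 1) (\<Sum>i\<in>UNIV. ?u (z $ k) $ i + 1) * (\<Sum>i\<in>UNIV. c z k i)) = P z k"
          unfolding P_def by simp
      qed
    qed
    have pa: "partial_at (loss_logits L A ?y) k z = P z k" for z k
      unfolding partial_at_def by (rule DERIV_imp_deriv[OF key])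
    have pd: "partial_differentiable (loss_logits L A ?y) k z" for z k
      unfolding partial_differentiable_def real_differentiable_def using key by blast
    have evl: "((\<lambda>z::real^'n. evidence A z $ j) \<longlongrightarrow> 0) all_to_bot" for j
      unfolding evidence_def using filterlim_compose[OF act_bot[OF A] coord_bot[of j]] by simp
    have cl: "((\<lambda>z::real^'n. c z k j) \<longlongrightarrow> 0) all_to_bot" for k j
      unfolding c_def using filterlim_compose[OF actd_bot[OF A] coord_bot[of k]] by (cases "j = k") auto
    have Sl: "((\<lambda>z::real^'n. \<Sum>i\<in>UNIV. evidence A z $ i + 1) \<longlongrightarrow> (\<Sum>i\<in>(UNIV::'n set). 0 + 1)) all_to_bot"
      by (rule tendsto_sum, rule tendsto_add[OF evl tendsto_const])
    have S0: "(\<Sum>i\<in>(UNIV::'n set). (0::real) + 1) > 0" by simp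
    have Pl: "((\<lambda>z. P z k) \<longlongrightarrow> 0) all_to_bot" for k
    proof -
      have "((\<lambda>z. P z k) \<longlongrightarrow> (\<Sum>j\<in>UNIV. dA L (?y$j) (0 + 1) (\<Sum>i\<in>(UNIV::'n set). 0 + 1) * 0
              + dS L (?y$j) (0 + 1) (\<Sum>i\<in>(UNIV::'n set). 0 + 1) * (\<Sum>i\<in>(UNIV::'n set). 0))) all_to_bot"
        unfolding P_def
        by (intro tendsto_sum tendsto_add tendsto_mult dA_tendsto dS_tendsto Sl S0 evl cl tendsto_const)
          simp_all
      then show ?thesis by simp
    qed
    have Jl: "((\<lambda>z. \<Sum>k\<in>UNIV. partial_at (loss_logits L A ?y) k z *\<^sub>R J z k) \<longlongrightarrow> 0) all_to_bot"
      if Jb: "\<exists>B. eventually (\<lambda>z. \<forall>k. norm (J z k) \<le> B) all_to_bot"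
      for J :: "real^'n \<Rightarrow> 'n \<Rightarrow> 'w::real_normed_vector"
    proof -
      obtain B where B: "eventually (\<lambda>z. \<forall>k. norm (J z k) \<le> B) all_to_bot" using Jb by blast
      show ?thesis unfolding pa
      proof (rule tendsto_null_sum)
        fix k :: 'n
        show "((\<lambda>z. P z k *\<^sub>R J z k) \<longlongrightarrow> 0) all_to_bot"
        proof (rule Lim_null_comparison)
          show "eventually (\<lambda>z. norm (P z k *\<^sub>R J z k) \<le> \<bar>P z k\<bar> * B) all_to_bot"
            using B by eventually_elim (auto intro: mult_left_mono)
          have "((\<lambda>z. \<bar>P z k\<bar> * B) \<longlongrightarrow> 0 * B) all_to_bot"
            by (intro tendsto_mult tendsto_rabs_zero Pl tendsto_const)
          then show "((\<lambda>z. \<bar>P z k\<bar> * B) \<longlongrightarrow> 0) all_to_bot" by simp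
        qed
      qed
    qed
    show ?thesis using pd Pl Jl unfolding pa by blast
  qed
  show ?thesis using P1 P2 by blast
qed

end
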